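(* There exist resource selection games in which all resources have the same strictly increasing delay function (i.e., $d_r=d$ for all $r\in R$ with $d$ strictly increasing), together with a social network $G=(N,E)$ and a starting state, such that there is an infinite sequence of states $s^0,s^1,s^2,\dots$ where each $s^{t+1}$ is obtained from $s^t$ by a weak considerate improving move of some coalition $C_t$ that is a clique in $G$.
   Context: Resource selection game: a finite set $N$ of players and a finite set $R$ of resources; every player's strategy set is $R$, and for each $r\in R$ there is a non-negative delay function $d_r:\{1,\dots,|N|\}\to\mathbb{N}$. A state is $s=(s_i)_{i\in N}$ with $s_i\in R$; $\ell_r(s)$ is the number of players choosing $r$; player $i$'s cost is $c_i(s)=d_{s_i}(\ell_{s_i}(s))$ and utility $u_i(s)=-c_i(s)$. For $C\subseteq N$ write $s=(s_C,s_{-C})$. Given an undirected graph $G=(N,E)$, $\mathcal{N}(C)=\{j\in N:\exists i\in C,\ \{i,j\}\in E\}$. A weak considerate improving move of coalition $C$ from state $s$ is a choice $s'_C$ such that $u_i(s'_C,s_{-C})\ge u_i(s)$ for all $i\in C\cup\mathcal{N}(C)$ and $u_i(s'_C,s_{-C})>u_i(s)$ for at least one $i\in C$; the resulting state is $(s'_C,s_{-C})$. *)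

theory Defs
  imports Main
begin

text \<open>Resource selection game with player set N, resource set R and delay functions
  d r (only their values on 1..card N matter). A state is a function from players to
  resources; only its values on N matter.\<close>

definition load :: "'p set \<Rightarrow> ('p \<Rightarrow> 'r) \<Rightarrow> 'r \<Rightarrow> nat" where
  "load N s r = card {i \<in> N. s i = r}"

definition cost :: "'p set \<Rightarrow> ('r \<Rightarrow> nat \<Rightarrow> nat) \<Rightarrow> ('p \<Rightarrow> 'r) \<Rightarrow> 'p \<Rightarrow> nat" where
  "cost N d s i = d (s i) (load N s (s i))"

definition utility :: "'p set \<Rightarrow> ('r \<Rightarrow> nat \<Rightarrow> nat) \<Rightarrow> ('p \<Rightarrow> 'r) \<Rightarrow> 'p \<Rightarrow> int" where
  "utility N d s i = - int (cost N d s i)"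

definition is_state :: "'p set \<Rightarrow> 'r set \<Rightarrow> ('p \<Rightarrow> 'r) \<Rightarrow> bool" where
  "is_state N R s \<longleftrightarrow> (\<forall>i\<in>N. s i \<in> R)"

definition undirected_graph :: "'p set \<Rightarrow> ('p \<times> 'p) set \<Rightarrow> bool" where
  "undirected_graph N E \<longleftrightarrow> E \<subseteq> N \<times> N \<and> (\<forall>i j. (i, j) \<in> E \<longrightarrow> (j, i) \<in> E)
     \<and> (\<forall>i. (i, i) \<notin> E)"

definition neighbourhood :: "'p set \<Rightarrow> ('p \<times> 'p) set \<Rightarrow> 'p set \<Rightarrow> 'p set" where
  "neighbourhood N E C = {j \<in> N. \<exists>i\<in>C. (i, j) \<in> E}"

definition is_clique :: "'p set \<Rightarrow> ('p \<times> 'p) set \<Rightarrow> 'p set \<Rightarrow> bool" where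
  "is_clique N E C \<longleftrightarrow> C \<subseteq> N \<and> (\<forall>i\<in>C. \<forall>j\<in>C. i \<noteq> j \<longrightarrow> (i, j) \<in> E)"

definition weak_considerate_move ::
  "'p set \<Rightarrow> 'r set \<Rightarrow> ('r \<Rightarrow> nat \<Rightarrow> nat) \<Rightarrow> ('p \<times> 'p) set \<Rightarrow> 'p set
    \<Rightarrow> ('p \<Rightarrow> 'r) \<Rightarrow> ('p \<Rightarrow> 'r) \<Rightarrow> bool" where
  "weak_considerate_move N R d E C s s' \<longleftrightarrow>
     C \<subseteq> N \<and>
     (\<forall>i\<in>C. s' i \<in> R) \<and>
     (\<forall>i\<in>N - C. s' i = s i) \<and>
     (\<forall>i\<in>C \<union> neighbourhood N E C. utility N d s' i \<ge> utility N d s i) \<and>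
     (\<exists>i\<in>C. utility N d s' i > utility N d s i)"

end

theory Submission
  imports Defs
begin

definition st :: "nat list list" where
  "st = [[0,0,1,1,1,2,2,2], [0,0,0,1,1,2,2,1], [0,0,0,2,2,2,1,1], [0,2,0,2,2,1,1,1], [2,2,0,0,0,1,1,1], [2,2,2,0,0,1,1,0], [2,2,2,1,1,1,0,0], [2,1,2,1,1,0,0,0], [1,1,2,2,2,0,0,0], [1,1,1,2,2,0,0,2], [1,1,1,0,0,0,2,2], [1,0,1,0,0,2,2,2]]"

definition cs :: "nat list list" where
  "cs = [[2,6,7], [3,4,6,7], [5,0,1], [4,3,0,1], [2,6,7], [3,4,6,7], [5,0,1], [4,3,0,1], [2,6,7], [3,4,6,7], [5,0,1], [4,3,0,1]]"

definition Ed :: "(nat \<times> nat) set" where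
  "Ed = set [(0,1), (1,0), (0,3), (3,0), (0,4), (4,0), (0,5), (5,0), (1,3), (3,1), (1,4), (4,1), (1,5), (5,1), (2,5), (5,2), (2,6), (6,2), (2,7), (7,2), (3,4), (4,3), (3,6), (6,3), (3,7), (7,3), (4,6), (6,4), (4,7), (7,4), (6,7), (7,6)]"

definition Nn :: "nat set" where "Nn = {0..<8}"

lemma mem_Nn: "x \<in> Nn \<longleftrightarrow> x < 8" unfolding Nn_def by simp

lemma ball_Nn: "(\<forall>i\<in>Nn. P i) \<longleftrightarrow> P 0 \<and> P 1 \<and> P 2 \<and> P 3 \<and> P 4 \<and> P 5 \<and> P 6 \<and> P 7"
proof -
  have e: "Nn = {0,1,2,3,4,5,6,7}" unfolding Nn_def by auto
  show ?thesis unfolding e by simp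
qed

lemma load_Nn:
  "load Nn s r = length (filter (\<lambda>i. s i = r) [0,1,2,3,4,5,6,7])"
proof -
  have e1: "[0..<8] = [0,1,2,3,4,5,6,7::nat]" by (simp add: upt_rec)
  have eq: "{i \<in> Nn. s i = r} = set (filter (\<lambda>i. s i = r) [0..<8])" unfolding Nn_def by auto
  have "card (set (filter (\<lambda>i. s i = r) [0..<8])) = length (filter (\<lambda>i. s i = r) [0..<8])"
    by (rule distinct_card) simp
  then show ?thesis unfolding load_def eq e1 .
qed

lemma wcm_intro:
  assumes "C \<subseteq> N" "\<forall>i\<in>C. s' i \<in> R" "\<forall>i\<in>N. i \<notin> C \<longrightarrow> s' i = s i"
    "\<forall>i\<in>N. (i \<in> C \<or> (\<exists>k\<in>C. (k,i)\<in>E)) \<longrightarrow> utility N d s' i \<ge> utility N d s i"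
    "\<exists>i\<in>C. utility N d s' i > utility N d s i"
  shows "weak_considerate_move N R d E C s s'"
  using assms unfolding weak_considerate_move_def neighbourhood_def by blast

definition ok :: "nat \<Rightarrow> bool" where
  "ok j \<longleftrightarrow> is_clique Nn Ed (set (cs ! j)) \<and>
     weak_considerate_move Nn {0,1,2} (\<lambda>r x. x) Ed (set (cs ! j)) (\<lambda>i. st ! j ! i) (\<lambda>i. st ! ((Suc j) mod 12) ! i)"

lemma ok0: "ok 0"
  unfolding ok_def
  apply (intro conjI)
   apply (simp add: is_clique_def Ed_def cs_def mem_Nn)
  apply (rule wcm_intro)
      apply (simp_all only: ball_Nn)
      apply (simp_all add: st_def cs_def Ed_def utility_def cost_def load_Nn mem_Nn)
  done

lemma ok1: "ok 1"
  unfolding ok_def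
  apply (intro conjI)
   apply (simp add: is_clique_def Ed_def cs_def mem_Nn)
  apply (rule wcm_intro)
      apply (simp_all only: ball_Nn)
      apply (simp_all add: st_def cs_def Ed_def utility_def cost_def load_Nn mem_Nn)
  done

lemma ok2: "ok 2"
  unfolding ok_def
  apply (intro conjI)
   apply (simp add: is_clique_def Ed_def cs_def mem_Nn)
  apply (rule wcm_intro)
      apply (simp_all only: ball_Nn)
      apply (simp_all add: st_def cs_def Ed_def utility_def cost_def load_Nn mem_Nn)
  done

lemma ok3: "ok 3"
  unfolding ok_def
  apply (intro conjI)
   apply (simp add: is_clique_def Ed_def cs_def mem_Nn)
  apply (rule wcm_intro)
      apply (simp_all only: ball_Nn)
      apply (simp_all add: st_def cs_def Ed_def utility_def cost_def load_Nn mem_Nn)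
  done

lemma ok4: "ok 4"
  unfolding ok_def
  apply (intro conjI)
   apply (simp add: is_clique_def Ed_def cs_def mem_Nn)
  apply (rule wcm_intro)
      apply (simp_all only: ball_Nn)
      apply (simp_all add: st_def cs_def Ed_def utility_def cost_def load_Nn mem_Nn)
  done

lemma ok5: "ok 5"
  unfolding ok_def
  apply (intro conjI)
   apply (simp add: is_clique_def Ed_def cs_def mem_Nn)
  apply (rule wcm_intro)
      apply (simp_all only: ball_Nn)
      apply (simp_all add: st_def cs_def Ed_def utility_def cost_def load_Nn mem_Nn)
  done

lemma ok6: "ok 6"
  unfolding ok_def
  apply (intro conjI)
   apply (simp add: is_clique_def Ed_def cs_def mem_Nn)
  apply (rule wcm_intro)
      apply (simp_all only: ball_Nn)
      apply (simp_all add: st_def cs_def Ed_def utility_def cost_def load_Nn mem_Nn)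
  done

lemma ok7: "ok 7"
  unfolding ok_def
  apply (intro conjI)
   apply (simp add: is_clique_def Ed_def cs_def mem_Nn)
  apply (rule wcm_intro)
      apply (simp_all only: ball_Nn)
      apply (simp_all add: st_def cs_def Ed_def utility_def cost_def load_Nn mem_Nn)
  done

lemma ok8: "ok 8"
  unfolding ok_def
  apply (intro conjI)
   apply (simp add: is_clique_def Ed_def cs_def mem_Nn)
  apply (rule wcm_intro)
      apply (simp_all only: ball_Nn)
      apply (simp_all add: st_def cs_def Ed_def utility_def cost_def load_Nn mem_Nn)
  done

lemma ok9: "ok 9"
  unfolding ok_def
  apply (intro conjI)
   apply (simp add: is_clique_def Ed_def cs_def mem_Nn)
  apply (rule wcm_intro)
      apply (simp_all only: ball_Nn)
      apply (simp_all add: st_def cs_def Ed_def utility_def cost_def load_Nn mem_Nn)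
  done

lemma ok10: "ok 10"
  unfolding ok_def
  apply (intro conjI)
   apply (simp add: is_clique_def Ed_def cs_def mem_Nn)
  apply (rule wcm_intro)
      apply (simp_all only: ball_Nn)
      apply (simp_all add: st_def cs_def Ed_def utility_def cost_def load_Nn mem_Nn)
  done

lemma ok11: "ok 11"
  unfolding ok_def
  apply (intro conjI)
   apply (simp add: is_clique_def Ed_def cs_def mem_Nn)
  apply (rule wcm_intro)
      apply (simp_all only: ball_Nn)
      apply (simp_all add: st_def cs_def Ed_def utility_def cost_def load_Nn mem_Nn)
  done

lemma step_ok:
  assumes "j < 12"
  shows "ok j"
proof -
  have "j = 0 \<or> j = 1 \<or> j = 2 \<or> j = 3 \<or> j = 4 \<or> j = 5 \<or> j = 6 \<or> j = 7 \<or> j = 8 \<or> j = 9 \<or> j = 10 \<or> j = 11"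
    using assms by presburger
  then show ?thesis using ok0 ok1 ok2 ok3 ok4 ok5 ok6 ok7 ok8 ok9 ok10 ok11 by auto
qed

theorem theorem2:
  shows "\<exists>(N :: nat set) (R :: nat set) (d :: nat \<Rightarrow> nat) (E :: (nat \<times> nat) set)
            (s :: nat \<Rightarrow> nat \<Rightarrow> nat) (C :: nat \<Rightarrow> nat set).
     finite N \<and> finite R \<and>
     strict_mono_on {1..card N} d \<and>
     undirected_graph N E \<and>
     is_state N R (s 0) \<and>
     (\<forall>t. is_clique N E (C t) \<and>
          weak_considerate_move N R (\<lambda>r. d) E (C t) (s t) (s (Suc t)))"
proof (intro exI conjI allI)
  show "finite Nn" by (simp add: Nn_def)
  show "finite {0,1,2::nat}" by simp
  show "strict_mono_on {1..card Nn} (\<lambda>x::nat. x)" by (simp add: strict_mono_on_def)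
  show "undirected_graph Nn Ed"
    unfolding undirected_graph_def Ed_def by (auto simp: mem_Nn)
  show "is_state Nn {0,1,2} ((\<lambda>t i. st ! (t mod 12) ! i) 0)"
    unfolding is_state_def ball_Nn by (simp add: st_def)
  fix t
  have "ok (t mod 12)" by (rule step_ok) simp
  then have "is_clique Nn Ed (set (cs ! (t mod 12))) \<and>
     weak_considerate_move Nn {0,1,2} (\<lambda>r x. x) Ed (set (cs ! (t mod 12)))
        (\<lambda>i. st ! (t mod 12) ! i) (\<lambda>i. st ! (Suc t mod 12) ! i)"
    unfolding ok_def by (simp add: mod_Suc_eq)
  then show "is_clique Nn Ed ((\<lambda>t. set (cs ! (t mod 12))) t)"
    and "weak_considerate_move Nn {0,1,2} (\<lambda>r x. x) Ed ((\<lambda>t. set (cs ! (t mod 12))) t)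
          ((\<lambda>t i. st ! (t mod 12) ! i) t) ((\<lambda>t i. st ! (t mod 12) ! i) (Suc t))"
    by simp_all
qed

end
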